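(* Let $\mathcal{C}\subseteq\mathbb{R}^n$ be a nonempty closed convex set and $\theta_0\in\mathcal{C}$. Then for every $x\in\mathbb{R}^n$, $$\|\Pi_{F_{\mathcal{C}}(\theta_0)}(x)\|^2\ge\|\Pi_{K_{\mathcal{C}}}(x)\|^2.$$
   Context: $\Pi_S$ is Euclidean projection onto a closed convex set $S$. $F_{\mathcal{C}}(\theta_0)=\{\theta-\theta_0:\theta\in\mathcal{C}\}$; $T_{\mathcal{C}}(\theta)=\mathrm{cl}\{\alpha(\theta'-\theta):\alpha\ge0,\theta'\in\mathcal{C}\}$ is the tangent cone; $K_{\mathcal{C}}=\bigcap_{\theta\in\mathcal{C}}T_{\mathcal{C}}(\theta)$ is the core cone. *)

theory Defs
  imports "HOL-Analysis.Analysis"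
begin

definition proj :: "'a::euclidean_space set \<Rightarrow> 'a \<Rightarrow> 'a" where
  "proj S x = closest_point S x"

definition feas_dir :: "'a::euclidean_space set \<Rightarrow> 'a \<Rightarrow> 'a set" where
  "feas_dir C \<theta>0 = {\<theta> - \<theta>0 | \<theta>. \<theta> \<in> C}"

definition tangent_cone :: "'a::euclidean_space set \<Rightarrow> 'a \<Rightarrow> 'a set" where
  "tangent_cone C \<theta> = closure {\<alpha> *\<^sub>R (\<theta>' - \<theta>) | \<alpha> \<theta>'. \<alpha> \<ge> 0 \<and> \<theta>' \<in> C}"

definition core_cone :: "'a::euclidean_space set \<Rightarrow> 'a set" where
  "core_cone C = (\<Inter>\<theta>\<in>C. tangent_cone C \<theta>)"

end

theory Submission
  imports Defs
begin

lemma tc_half: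
  fixes C :: "'a::euclidean_space set"
  assumes "closed C" "convex C" "C \<noteq> {}"
  shows "tangent_cone C (closest_point C y) \<subseteq> {v. inner (y - closest_point C y) v \<le> 0}"
proof -
  let ?z = "closest_point C y"
  have "{\<alpha> *\<^sub>R (\<theta>' - ?z) | \<alpha> \<theta>'. \<alpha> \<ge> 0 \<and> \<theta>' \<in> C} \<subseteq> {v. inner (y - ?z) v \<le> 0}"
  proof
    fix v assume "v \<in> {\<alpha> *\<^sub>R (\<theta>' - ?z) | \<alpha> \<theta>'. \<alpha> \<ge> 0 \<and> \<theta>' \<in> C}"
    then obtain \<alpha> :: real and t where v: "v = \<alpha> *\<^sub>R (t - ?z)" "\<alpha> \<ge> 0" "t \<in> C" by blast
    have "inner (y - ?z) (t - ?z) \<le> 0" using closest_point_dot[OF assms(2,1) v(3)] by simp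
    then show "v \<in> {v. inner (y - ?z) v \<le> 0}" using v(2)
      by (simp add: v(1) mult_nonneg_nonpos)
  qed
  then show ?thesis unfolding tangent_cone_def
    by (intro closure_minimal) (auto intro: closed_halfspace_le)
qed

lemma core_rec:
  fixes C :: "'a::euclidean_space set"
  assumes "closed C" "convex C" "d \<in> core_cone C" "\<theta> \<in> C"
  shows "\<theta> + d \<in> C"
proof -
  have ne: "C \<noteq> {}" using assms(4) by blast
  define y where "y = \<theta> + d"
  define z where "z = closest_point C y"
  have zC: "z \<in> C" unfolding z_def using closest_point_in_set[OF assms(1) ne] .
  have "d \<in> tangent_cone C z" using assms(3) zC unfolding core_cone_def by blast
  hence 1: "inner (y - z) d \<le> 0" using tc_half[OF assms(1,2) ne, of y] unfolding z_def by blast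
  have 2: "inner (y - z) (\<theta> - z) \<le> 0" unfolding z_def using closest_point_dot[OF assms(2,1,4)] by simp
  have "y - z = (\<theta> - z) + d" unfolding y_def by simp
  hence "inner (y - z) (y - z) = inner (y - z) (\<theta> - z) + inner (y - z) d"
    by (metis inner_add_right)
  with 1 2 have "inner (y - z) (y - z) \<le> 0" by linarith
  hence "inner (y - z) (y - z) = 0" using inner_ge_zero[of "y - z"] by linarith
  hence "y = z" by simp
  with zC show ?thesis unfolding y_def by simp
qed

lemma core_scale:
  fixes C :: "'a::euclidean_space set"
  assumes "v \<in> core_cone C" "t \<ge> 0"
  shows "t *\<^sub>R v \<in> core_cone C"
  unfolding core_cone_def
proof
  fix \<theta> assume th: "\<theta> \<in> C"
  let ?S = "{\<alpha> *\<^sub>R (\<theta>' - \<theta>) | \<alpha> \<theta>'. \<alpha> \<ge> 0 \<and> \<theta>' \<in> C}"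
  have "v \<in> closure ?S" using assms(1) th unfolding core_cone_def tangent_cone_def by blast
  hence "t *\<^sub>R v \<in> ((*\<^sub>R) t) ` closure ?S" by blast
  also have "\<dots> = closure (((*\<^sub>R) t) ` ?S)" by (rule closure_scaleR)
  also have "\<dots> \<subseteq> closure ?S"
  proof (rule closure_mono)
    show "((*\<^sub>R) t) ` ?S \<subseteq> ?S"
    proof
      fix w assume "w \<in> ((*\<^sub>R) t) ` ?S"
      then obtain \<alpha> :: real and \<theta>' where a: "w = t *\<^sub>R \<alpha> *\<^sub>R (\<theta>' - \<theta>)" "\<alpha> \<ge> 0" "\<theta>' \<in> C"
        by blast
      have "w = (t * \<alpha>) *\<^sub>R (\<theta>' - \<theta>) \<and> t * \<alpha> \<ge> 0 \<and> \<theta>' \<in> C"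
        using a assms(2) by simp
      then show "w \<in> ?S" by blast
    qed
  qed
  finally show "t *\<^sub>R v \<in> tangent_cone C \<theta>" unfolding tangent_cone_def .
qed

lemma core_zero:
  fixes C :: "'a::euclidean_space set"
  shows "0 \<in> core_cone C"
proof -
  have "0 \<in> tangent_cone C \<theta>" if th: "\<theta> \<in> C" for \<theta>
  proof -
    have "0 \<in> {\<alpha> *\<^sub>R (\<theta>' - \<theta>) | \<alpha> \<theta>'. \<alpha> \<ge> 0 \<and> \<theta>' \<in> C}"
      unfolding mem_Collect_eq by (rule exI[of _ 0], rule exI[of _ \<theta>]) (simp add: th)
    then show ?thesis unfolding tangent_cone_def by (rule subsetD[OF closure_subset])
  qed
  then show ?thesis unfolding core_cone_def by blast
qed

lemma core_closed: "closed (core_cone C)"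
  unfolding core_cone_def tangent_cone_def by (intro closed_INT) auto

theorem lemma11:
  fixes C :: "(real ^ 'n) set" and \<theta>0 :: "real ^ 'n"
  assumes "C \<noteq> {}" and "closed C" and "convex C" and "\<theta>0 \<in> C"
  shows "\<forall>x. (norm (proj (feas_dir C \<theta>0) x))\<^sup>2 \<ge> (norm (proj (core_cone C) x))\<^sup>2"
proof
  fix x :: "real ^ 'n"
  define F where "F = feas_dir C \<theta>0"
  define K where "K = core_cone C"
  have Feq: "F = (\<lambda>\<theta>. (- \<theta>0) + \<theta>) ` C" unfolding F_def feas_dir_def by auto
  have Fcl: "closed F" unfolding Feq using assms(2) by (rule closed_translation)
  have Fcv: "convex F" unfolding Feq using assms(3) by (rule convex_translation)
  have Fne: "F \<noteq> {}" unfolding Feq using assms(1) by blast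
  have Kcl: "closed K" unfolding K_def by (rule core_closed)
  have Kne: "K \<noteq> {}" unfolding K_def using core_zero by blast
  define p where "p = closest_point F x"
  define q where "q = closest_point K x"
  have pF: "p \<in> F" unfolding p_def by (rule closest_point_in_set[OF Fcl Fne])
  have qK: "q \<in> K" unfolding q_def by (rule closest_point_in_set[OF Kcl Kne])
  obtain \<theta> where th: "\<theta> \<in> C" "p = \<theta> - \<theta>0" using pF unfolding F_def feas_dir_def by blast
  have "\<theta> + q \<in> C" using core_rec[OF assms(2,3) qK[unfolded K_def] th(1)] .
  moreover have "p + q = (\<theta> + q) - \<theta>0" using th(2) by simp
  ultimately have "p + q \<in> F" unfolding F_def feas_dir_def by blast
  hence "inner (x - p) ((p + q) - p) \<le> 0" unfolding p_def by (rule closest_point_dot[OF Fcv Fcl])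
  hence xpq: "inner x q \<le> inner p q" by (simp add: inner_diff_left)
  have pq: "inner p q \<le> norm p * norm q" by (rule norm_cauchy_schwarz)
  have key: "(1 + t) * (norm q)\<^sup>2 \<le> 2 * inner x q" if t: "0 \<le> t" "t < 1" for t
  proof -
    have "t *\<^sub>R q \<in> K" unfolding K_def using core_scale qK[unfolded K_def] t(1) by blast
    hence "dist x q \<le> dist x (t *\<^sub>R q)" unfolding q_def by (rule closest_point_le[OF Kcl])
    hence "norm (x - q) \<le> norm (x - t *\<^sub>R q)" by (simp add: dist_norm)
    hence "(norm (x - q))\<^sup>2 \<le> (norm (x - t *\<^sub>R q))\<^sup>2"
      by (intro power_mono) simp_all
    hence le: "inner (x - q) (x - q) \<le> inner (x - t *\<^sub>R q) (x - t *\<^sub>R q)"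
      by (simp add: power2_norm_eq_inner)
    have e1: "inner (x - q) (x - q) = inner x x - 2 * inner x q + inner q q"
      by (simp add: inner_diff_left inner_diff_right inner_commute[of q x])
    have e2: "inner (x - t *\<^sub>R q) (x - t *\<^sub>R q) = inner x x - 2 * t * inner x q + t * t * inner q q"
      by (simp add: inner_diff_left inner_diff_right inner_commute[of q x] algebra_simps)
    have e3: "(1 - t) * ((1 + t) * inner q q) - (1 - t) * (2 * inner x q)
        = (inner x x - 2 * inner x q + inner q q) - (inner x x - 2 * t * inner x q + t * t * inner q q)"
      by (simp add: algebra_simps)
    have "(1 - t) * ((1 + t) * inner q q) \<le> (1 - t) * (2 * inner x q)"
      using le e1 e2 e3 by linarith
    hence "(1 + t) * inner q q \<le> 2 * inner x q"
      by (rule mult_left_le_imp_le) (use t(2) in simp)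
    then show ?thesis by (simp add: power2_norm_eq_inner)
  qed
  have "norm q \<le> norm p"
  proof (rule ccontr)
    assume "\<not> norm q \<le> norm p"
    hence lt: "norm p < norm q" by simp
    have nq: "norm q > 0" using lt norm_ge_zero[of p] by linarith
    define t where "t = norm p / norm q"
    have t0: "0 \<le> t" unfolding t_def by simp
    have t1: "t < 1" unfolding t_def using lt nq by simp
    have A: "(1 + t) * (norm q)\<^sup>2 \<le> 2 * (norm p * norm q)" using key[OF t0 t1] xpq pq by linarith
    have tq: "t * norm q = norm p" unfolding t_def using nq by simp
    have "(1 + t) * (norm q)\<^sup>2 = norm q * (norm q + t * norm q)"
      by (simp add: power2_eq_square algebra_simps)
    hence B: "(1 + t) * (norm q)\<^sup>2 = norm q * (norm q + norm p)" using tq by simp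
    have C: "2 * (norm p * norm q) = norm q * (2 * norm p)" by simp
    have "norm q * (norm q + norm p) \<le> norm q * (2 * norm p)" using A B C by linarith
    hence "norm q + norm p \<le> 2 * norm p"
      by (rule mult_left_le_imp_le) (use nq in simp)
    with lt show False by simp
  qed
  hence "(norm q)\<^sup>2 \<le> (norm p)\<^sup>2" by (intro power_mono) simp_all
  then show "(norm (proj (feas_dir C \<theta>0) x))\<^sup>2 \<ge> (norm (proj (core_cone C) x))\<^sup>2"
    unfolding proj_def p_def q_def F_def K_def .
qed

end
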